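(* Let $g\in C^1$ be a Riemannian metric on $\mathbb{R}^D$ written as $g_x(u,u)=u^{\top}H(x)u$, with $c_1\|u\|_2^2\le g_x(u,u)$ for all $x,u$ (some $c_1>0$) and $\|H(x)-H(y)\|_{\mathcal{B}}\le L_H\|x-y\|_2$ for all $x,y$. Then for all $i,j,k$ and all $x$, $$|\Gamma^k_{ij}(x)|\le\frac{3L_HD^{1/2}}{2c_1}.$$
   Context: $g_{ij}=H_{ij}$, $(g^{ij})$ is the inverse matrix of $(g_{ij})$, and the Christoffel symbols are $\Gamma^k_{ij}=\frac12\sum_{\ell=1}^D g^{k\ell}\left(\frac{\partial g_{\ell j}}{\partial x_i}+\frac{\partial g_{i\ell}}{\partial x_j}-\frac{\partial g_{ij}}{\partial x_\ell}\right)$. $\|\cdot\|_{\mathcal{B}}$ is the operator norm. *)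

theory Defs
  imports "HOL-Analysis.Analysis"
begin

definition partial_mat :: "(real^'n \<Rightarrow> real^'n^'n) \<Rightarrow> 'n \<Rightarrow> real^'n \<Rightarrow> real^'n^'n" where
  "partial_mat H m x = frechet_derivative H (at x) (axis m 1)"

definition christoffel :: "(real^'n \<Rightarrow> real^'n^'n) \<Rightarrow> 'n \<Rightarrow> 'n \<Rightarrow> 'n \<Rightarrow> real^'n \<Rightarrow> real" where
  "christoffel H k i j x = (1/2) * (\<Sum>l\<in>UNIV. matrix_inv (H x) $ k $ l *
      (partial_mat H i x $ l $ j + partial_mat H j x $ i $ l - partial_mat H l x $ i $ j))"

end

theory Submission
  imports Defs
begin
lemma mv_linear: "bounded_linear (\<lambda>M::real^'n^'n. M *v v)"
proof -
  have "linear (\<lambda>M::real^'n^'n. M *v v)"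
    by (rule linearI) (simp_all add: matrix_vector_mult_add_rdistrib scaleR_matrix_vector_assoc)
  then show ?thesis using linear_conv_bounded_linear by blast
qed

lemma deriv_bound:
  fixes H :: "real^'n \<Rightarrow> real^'n^'n"
  assumes hd: "(H has_derivative D) (at x)"
    and lip: "\<forall>x y. onorm (\<lambda>v. (H x - H y) *v v) \<le> L * dist x y"
    and e: "norm e = 1"
  shows "norm (D e *v v) \<le> L * norm v"
proof -
  define g where "g t = H (x + t *\<^sub>R e) *v v" for t
  have blD: "bounded_linear D" using hd has_derivative_bounded_linear by blast
  have h0: "((\<lambda>t::real. x + t *\<^sub>R e) has_derivative (\<lambda>t. t *\<^sub>R e)) (at 0)"
    by (auto intro!: derivative_eq_intros)
  have hd': "(H has_derivative D) (at ((\<lambda>t::real. x + t *\<^sub>R e) 0))" using hd by simp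
  have h1: "((\<lambda>t. H (x + t *\<^sub>R e)) has_derivative (\<lambda>t. D (t *\<^sub>R e))) (at 0)"
    using has_derivative_compose[OF h0 hd'] by simp
  have h2: "(g has_derivative (\<lambda>t. D (t *\<^sub>R e) *v v)) (at 0)"
    unfolding g_def using bounded_linear.has_derivative[OF mv_linear h1] by simp
  have lim: "((\<lambda>h. norm (g (0 + h) - g 0 - D (h *\<^sub>R e) *v v) / norm h) \<longlongrightarrow> 0) (at 0)"
    using h2[unfolded has_derivative_at] by auto
  have lim2: "((\<lambda>h. L * norm v + norm (g (0 + h) - g 0 - D (h *\<^sub>R e) *v v) / norm h) \<longlongrightarrow> L * norm v + 0) (at 0)"
    by (intro tendsto_intros lim)
  have ev: "\<forall>\<^sub>F h in at (0::real). norm (D e *v v) \<le> L * norm v + norm (g (0 + h) - g 0 - D (h *\<^sub>R e) *v v) / norm h"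
  proof (rule eventually_at_filter[THEN iffD2], intro always_eventually allI impI)
    fix h :: real assume "h \<noteq> 0"
    have Dh: "D (h *\<^sub>R e) *v v = h *\<^sub>R (D e *v v)"
      by (simp add: blD bounded_linear.linear linear_scale scaleR_matrix_vector_assoc)
    have "g h - g 0 = (H (x + h *\<^sub>R e) - H x) *v v" unfolding g_def by (simp add: matrix_vector_mult_diff_rdistrib)
    then have "norm (g h - g 0) \<le> onorm (\<lambda>v. (H (x + h *\<^sub>R e) - H x) *v v) * norm v"
      by (simp add: onorm)
    also have "\<dots> \<le> L * dist (x + h *\<^sub>R e) x * norm v"
      using lip by (simp add: mult_right_mono)
    also have "\<dots> = L * \<bar>h\<bar> * norm v" using e by (simp add: dist_norm)
    finally have A: "norm (g h - g 0) \<le> L * \<bar>h\<bar> * norm v" .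
    have "\<bar>h\<bar> * norm (D e *v v) = norm (D (h *\<^sub>R e) *v v)" by (simp add: Dh)
    also have "\<dots> \<le> norm (g h - g 0) + norm (g (0 + h) - g 0 - D (h *\<^sub>R e) *v v)"
      using norm_triangle_ineq4[of "g h - g 0" "g h - g 0 - D (h *\<^sub>R e) *v v"] by simp
    also have "\<dots> \<le> L * \<bar>h\<bar> * norm v + norm (g (0 + h) - g 0 - D (h *\<^sub>R e) *v v)"
      using A by simp
    also have "\<dots> = \<bar>h\<bar> * (L * norm v + norm (g (0 + h) - g 0 - D (h *\<^sub>R e) *v v) / norm h)"
      using \<open>h \<noteq> 0\<close> by (simp add: distrib_left)
    finally have "\<bar>h\<bar> * norm (D e *v v) \<le> \<bar>h\<bar> * (L * norm v + norm (g (0 + h) - g 0 - D (h *\<^sub>R e) *v v) / norm h)" .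
    then show "norm (D e *v v) \<le> L * norm v + norm (g (0 + h) - g 0 - D (h *\<^sub>R e) *v v) / norm h"
      using \<open>h \<noteq> 0\<close> by simp
  qed
  show ?thesis using tendsto_le[OF _ lim2 tendsto_const ev] by simp
qed
lemma row_bound:
  fixes M :: "real^'n^'n"
  assumes "\<forall>v. norm (M *v v) \<le> L * norm v"
  shows "norm (M $ i) \<le> L"
proof (cases "M $ i = 0")
  case True
  have "norm (M *v axis i 1) \<le> L" using assms[rule_format, of "axis i 1"] by simp
  then have "0 \<le> L" using norm_ge_zero[of "M *v axis i 1"] by linarith
  then show ?thesis using True by simp
next
  case False
  have "norm (M $ i) ^ 2 = (M *v (M $ i)) $ i"
    by (simp add: power2_norm_eq_inner inner_vec_def matrix_vector_mult_def)
  also have "\<dots> \<le> norm (M *v (M $ i))" using component_le_norm_cart abs_le_D1 by blast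
  also have "\<dots> \<le> L * norm (M $ i)" using assms by blast
  finally show ?thesis using False by (simp add: power2_eq_square)
qed

lemma vec_bound:
  fixes c :: "real^'n"
  assumes "\<forall>l. \<bar>c $ l\<bar> \<le> L"
  shows "norm c \<le> sqrt (real CARD('n)) * L"
proof -
  have L0: "0 \<le> L" using assms abs_ge_zero order_trans by blast
  have "norm c = sqrt (\<Sum>l\<in>UNIV. (c $ l)^2)" by (simp add: norm_vec_def L2_set_def)
  also have "\<dots> \<le> sqrt (\<Sum>l\<in>(UNIV::'n set). L^2)"
    using assms by (intro real_sqrt_le_mono sum_mono) (metis abs_ge_zero power2_abs power_mono)
  also have "\<dots> = sqrt (real CARD('n)) * L" using L0 by (simp add: real_sqrt_mult)
  finally show ?thesis .
qed

theorem proposition7p10: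
  fixes H :: "real^'n \<Rightarrow> real^'n^'n" and c1 L :: real
  assumes diff: "\<forall>x. H differentiable (at x)"
    and C1: "\<forall>v. continuous_on UNIV (\<lambda>x. frechet_derivative H (at x) v)"
    and sym: "\<forall>x. transpose (H x) = H x"
    and c1_pos: "c1 > 0"
    and lower: "\<forall>x u. c1 * (norm u)^2 \<le> u \<bullet> (H x *v u)"
    and lip: "\<forall>x y. onorm (\<lambda>v. (H x - H y) *v v) \<le> L * dist x y"
  shows "\<forall>i j k x. \<bar>christoffel H k i j x\<bar> \<le> 3 * L * sqrt (real CARD('n)) / (2 * c1)"
proof (intro allI)
  fix i j k x
  define P where "P m = partial_mat H m x" for m
  have hd: "(H has_derivative frechet_derivative H (at x)) (at x)"
    using diff frechet_derivative_works by blast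
  have PB: "\<forall>v. norm (P m *v v) \<le> L * norm v" for m
    unfolding P_def partial_mat_def using deriv_bound[OF hd lip] by simp
  have L0: "0 \<le> L" using PB[of i] norm_ge_zero[of "P i *v axis i 1"] by (metis mult.right_neutral norm_axis_1 norm_ge_zero order_trans)
  have row: "norm (P m $ a) \<le> L" for m a using row_bound[OF PB] .
  have ent: "\<bar>P m $ a $ b\<bar> \<le> L" for m a b using row[of m a] component_le_norm_cart[of "P m $ a" b] by linarith
  define a where "a = (\<chi> l. P i $ l $ j + P j $ i $ l - P l $ i $ j)"
  define c where "c = (\<chi> l. P l $ i $ j)"
  have "a = P i *v axis j 1 + P j $ i - c"
    unfolding a_def c_def by (simp add: vec_eq_iff matrix_vector_mult_basis column_def)
  then have "norm a \<le> norm (P i *v axis j 1) + norm (P j $ i) + norm c"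
    using norm_triangle_ineq[of "P i *v axis j 1" "P j $ i"] norm_triangle_ineq4[of "P i *v axis j 1 + P j $ i" c] by simp
  moreover have "norm c \<le> sqrt (real CARD('n)) * L"
    by (rule vec_bound) (simp add: c_def ent)
  ultimately have na: "norm a \<le> L + L + sqrt (real CARD('n)) * L"
    using PB[of i, rule_format, of "axis j 1"] row[of j i] by simp
  have ker: "\<forall>y. H x *v y = 0 \<longrightarrow> y = 0"
  proof (intro allI impI)
    fix y assume "H x *v y = 0"
    then have "c1 * (norm y)^2 \<le> 0" using spec[OF spec[OF lower, of x], of y] by simp
    then show "y = 0" using c1_pos by (metis c1_pos mult_pos_pos norm_eq_zero not_le zero_less_norm_iff zero_less_power)
  qed
  then have "invertible (H x)" using matrix_left_invertible_ker invertible_left_inverse by blast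
  then have inv: "H x ** matrix_inv (H x) = mat 1"
    unfolding matrix_inv_def invertible_def by (rule someI_ex[where P="\<lambda>A'. H x ** A' = mat 1 \<and> A' ** H x = mat 1", THEN conjunct1])
  define y where "y = matrix_inv (H x) *v a"
  have Hy: "H x *v y = a" unfolding y_def using inv by (simp add: matrix_vector_mul_assoc)
  have "c1 * (norm y)^2 \<le> norm y * norm a"
    using spec[OF spec[OF lower, of x], of y] Hy Cauchy_Schwarz_ineq2[of y a] by simp
  then have ny: "c1 * norm y \<le> norm a"
    by (cases "norm y = 0") (auto simp: power2_eq_square)
  have chr: "christoffel H k i j x = (1/2) * y $ k"
    unfolding christoffel_def y_def a_def P_def by (simp add: matrix_vector_mult_def)
  have "\<bar>y $ k\<bar> \<le> norm a / c1" using ny c1_pos component_le_norm_cart[of y k]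
    by (simp add: pos_le_divide_eq mult.commute order_trans)
  also have "\<dots> \<le> (3 * L * sqrt (real CARD('n))) / c1"
  proof -
    have "1 \<le> sqrt (real CARD('n))" by simp
    then have "L + L + sqrt (real CARD('n)) * L \<le> 3 * L * sqrt (real CARD('n))" 
    proof -
      have "L * 1 \<le> L * sqrt (real CARD('n))" by (rule mult_left_mono) (fact+)
      then show ?thesis by (simp add: algebra_simps)
    qed
    then have "norm a \<le> 3 * L * sqrt (real CARD('n))" using na by linarith
    then show ?thesis using c1_pos by (simp add: divide_right_mono)
  qed
  finally show "\<bar>christoffel H k i j x\<bar> \<le> 3 * L * sqrt (real CARD('n)) / (2 * c1)"
    unfolding chr by simp
qed
end
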